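(* For every labelled program $P$ over a finite signature, every stable model of $P$ is a justified model of $P$: $\mathit{SM}(P)\subseteq \mathit{JM}(P)$.
   Context: Fix a finite non-empty set $\mathit{At}$ of propositional atoms. A labelled rule $r$ has the form $\ell : p_1 \vee \dots \vee p_m \leftarrow q_1 \wedge \dots \wedge q_n \wedge \neg s_1 \wedge \dots \wedge \neg s_j \wedge \neg\neg t_1 \wedge \dots \wedge \neg\neg t_k$ with $m,n,j,k \ge 0$ and atoms in $\mathit{At}$; $\mathit{Lb}(r)=\ell$, $\mathit{Hd}(r)=p_1\vee\dots\vee p_m$, $H(r)=\{p_1,\dots,p_m\}$, $\mathit{Bd}(r)$ is the whole antecedent, $\mathit{Bd}^+(r)=q_1\wedge\dots\wedge q_n$, $B^+(r)=\{q_1,\dots,q_n\}$, $\mathit{Bd}^-(r)=\neg s_1 \wedge \dots \wedge \neg s_j \wedge \neg\neg t_1 \wedge \dots \wedge \neg\neg t_k$. Empty disjunction is $\bot$, empty conjunction $\top$. A labelled program $P$ is a finite set of labelled rules with no repeated label; $\mathit{Lb}(P)$ is its set of labels. An interpretation $I\subseteq\mathit{At}$ is a (classical) model of $P$ if $I\models \mathit{Bd}(r)\to\mathit{Hd}(r)$ for every $r\in P$. The reduct is $P^I=\{\ \mathit{Lb}(r): \mathit{Hd}(r) \leftarrow \mathit{Bd}^+(r) \mid r \in P,\ I \models \mathit{Bd}^-(r)\ \}$. $I$ is a stable model of $P$ if $I$ is a $\subseteq$-minimal classical model of $P^I$; $\mathit{SM}(P)$ is the set of stable models. $\mathit{Sup}(I,P,p)=\{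 r \in P \mid p \in H(r),\ I \models \mathit{Bd}(r)\}$. A support graph of a model $I$ under $P$ is a directed graph $G=\langle I,E,\lambda\rangle$ with vertex set $I$, edges $E\subseteq I\times I$ and a labelling $\lambda: I\to \mathit{Lb}(P)$ such that (i) $\lambda$ is injective, and (ii) for every $p\in I$, the rule $r\in P$ with $\mathit{Lb}(r)=\lambda(p)$ satisfies $r\in \mathit{Sup}(I,P,p)$ and $B^+(r)=\{q \mid (q,p)\in E\}$. An explanation is an acyclic support graph. A classical model $I$ of $P$ is a justified model if some explanation of $I$ under $P$ exists; $\mathit{JM}(P)$ is the set of justified models. *)

theory Defs
  imports Main
begin

text \<open>Atoms range over a finite type 'a (the finite non-empty signature At = UNIV).
A labelled rule  l : p1 v ... v pm <- q1 & ... & qn & ~s1 & ... & ~sj & ~~t1 & ... & ~~tk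
is represented by its label, head atoms, positive body atoms, negated body atoms and
doubly negated body atoms.\<close>

record ('a, 'l) lrule =
  r_lb  :: 'l
  r_hd  :: "'a set"
  r_pos :: "'a set"
  r_neg :: "'a set"
  r_nn  :: "'a set"

definition labelled_program :: "('a, 'l) lrule set \<Rightarrow> bool" where
  "labelled_program P \<longleftrightarrow> finite P \<and> inj_on r_lb P"

definition Lb :: "('a, 'l) lrule set \<Rightarrow> 'l set" where
  "Lb P = r_lb ` P"

definition sat_hd :: "'a set \<Rightarrow> ('a, 'l) lrule \<Rightarrow> bool" where
  "sat_hd I r \<longleftrightarrow> (\<exists>p\<in>r_hd r. p \<in> I)"

definition sat_bd_neg :: "'a set \<Rightarrow> ('a, 'l) lrule \<Rightarrow> bool" where
  "sat_bd_neg I r \<longleftrightarrow> (\<forall>s\<in>r_neg r. s \<notin> I) \<and> (\<forall>t\<in>r_nn r. t \<in> I)"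

definition sat_bd :: "'a set \<Rightarrow> ('a, 'l) lrule \<Rightarrow> bool" where
  "sat_bd I r \<longleftrightarrow> (\<forall>q\<in>r_pos r. q \<in> I) \<and> sat_bd_neg I r"

definition is_model :: "'a set \<Rightarrow> ('a, 'l) lrule set \<Rightarrow> bool" where
  "is_model I P \<longleftrightarrow> (\<forall>r\<in>P. sat_bd I r \<longrightarrow> sat_hd I r)"

definition reduct :: "('a, 'l) lrule set \<Rightarrow> 'a set \<Rightarrow> ('a, 'l) lrule set" where
  "reduct P I = {\<lparr>r_lb = r_lb r, r_hd = r_hd r, r_pos = r_pos r, r_neg = {}, r_nn = {}\<rparr> | r.
                   r \<in> P \<and> sat_bd_neg I r}"

definition stable_model :: "'a set \<Rightarrow> ('a, 'l) lrule set \<Rightarrow> bool" where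
  "stable_model I P \<longleftrightarrow> is_model I (reduct P I) \<and>
     (\<forall>J. J \<subset> I \<longrightarrow> \<not> is_model J (reduct P I))"

definition SM :: "('a, 'l) lrule set \<Rightarrow> 'a set set" where
  "SM P = {I. stable_model I P}"

definition Sup :: "'a set \<Rightarrow> ('a, 'l) lrule set \<Rightarrow> 'a \<Rightarrow> ('a, 'l) lrule set" where
  "Sup I P p = {r \<in> P. p \<in> r_hd r \<and> sat_bd I r}"

definition support_graph ::
  "'a set \<Rightarrow> ('a, 'l) lrule set \<Rightarrow> ('a \<times> 'a) set \<Rightarrow> ('a \<Rightarrow> 'l) \<Rightarrow> bool" where
  "support_graph I P E lam \<longleftrightarrow>
     E \<subseteq> I \<times> I \<and> lam ` I \<subseteq> Lb P \<and> inj_on lam I \<and>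
     (\<forall>p\<in>I. \<forall>r\<in>P. r_lb r = lam p \<longrightarrow>
         r \<in> Sup I P p \<and> r_pos r = {q. (q, p) \<in> E})"

definition explanation ::
  "'a set \<Rightarrow> ('a, 'l) lrule set \<Rightarrow> ('a \<times> 'a) set \<Rightarrow> ('a \<Rightarrow> 'l) \<Rightarrow> bool" where
  "explanation I P E lam \<longleftrightarrow> support_graph I P E lam \<and> acyclic E"

definition justified_model :: "'a set \<Rightarrow> ('a, 'l) lrule set \<Rightarrow> bool" where
  "justified_model I P \<longleftrightarrow> is_model I P \<and> (\<exists>E lam. explanation I P E lam)"

definition JM :: "('a, 'l) lrule set \<Rightarrow> 'a set set" where
  "JM P = {I. justified_model I P}"

end

theory Submission
  imports Defs
begin

definition inv_sg :: "'a set \<Rightarrow> ('a, 'l) lrule set \<Rightarrow> 'a set \<Rightarrow> ('a \<times> 'a) set \<Rightarrow> ('a \<Rightarrow> 'l) \<Rightarrow> ('a \<Rightarrow> nat) \<Rightarrow> bool" where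
  "inv_sg I P J E lam f \<longleftrightarrow> E \<subseteq> J \<times> J \<and> inj_on lam J \<and>
     (\<forall>x\<in>J. f x < card J) \<and> (\<forall>(x,y)\<in>E. f x < f y) \<and>
     (\<forall>p\<in>J. \<exists>r\<in>P. r_lb r = lam p \<and> p \<in> r_hd r \<and> sat_bd I r \<and> r_pos r = {q. (q, p) \<in> E})"

lemma rank_acyclic:
  assumes "\<forall>(x,y)\<in>E. (f::'a\<Rightarrow>nat) x < f y"
  shows "acyclic E"
proof -
  have "E \<subseteq> inv_image less_than f" using assms by auto
  moreover have "wf (inv_image less_than f)" by simp
  ultimately have "wf E" using wf_subset by blast
  thus ?thesis by (rule wf_acyclic)
qed

lemma step:
  fixes I :: "'a::finite set"
  assumes lp: "labelled_program P" and sm: "stable_model I P"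
    and J: "J \<subset> I" and iv: "inv_sg I P J E lam f"
  shows "\<exists>p E' lam' f'. p \<in> I - J \<and> inv_sg I P (insert p J) E' lam' f'"
proof -
  have fin: "finite J" by simp
  have mI: "is_model I (reduct P I)" and nJ: "\<not> is_model J (reduct P I)"
    using sm J unfolding stable_model_def by auto
  then obtain r' where r': "r' \<in> reduct P I" "sat_bd J r'" "\<not> sat_hd J r'"
    unfolding is_model_def by auto
  then obtain r where r: "r \<in> P" "sat_bd_neg I r"
     and r'eq: "r' = \<lparr>r_lb = r_lb r, r_hd = r_hd r, r_pos = r_pos r, r_neg = {}, r_nn = {}\<rparr>"
    unfolding reduct_def by auto
  have posJ: "r_pos r \<subseteq> J" using r'(2) r'eq by (auto simp: sat_bd_def)
  have hdJ: "r_hd r \<inter> J = {}" using r'(3) r'eq by (auto simp: sat_hd_def)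
  have "sat_bd I r'" using posJ J r'eq by (auto simp: sat_bd_def sat_bd_neg_def)
  hence "sat_hd I r'" using mI r'(1) unfolding is_model_def by auto
  then obtain p where p: "p \<in> r_hd r" "p \<in> I" using r'eq by (auto simp: sat_hd_def)
  have pJ: "p \<notin> J" using p hdJ by auto
  have sbI: "sat_bd I r" using r posJ J by (auto simp: sat_bd_def)
  define E' where "E' = E \<union> {(q,p) | q. q \<in> r_pos r}"
  define lam' where "lam' = lam(p := r_lb r)"
  define f' where "f' = f(p := card J)"
  have injP: "inj_on r_lb P" using lp by (simp add: labelled_program_def)
  have iv1: "E \<subseteq> J \<times> J" and iv2: "inj_on lam J" and iv3: "\<forall>x\<in>J. f x < card J"
    and iv4: "\<forall>(x,y)\<in>E. f x < f y"
    and iv5: "\<forall>p\<in>J. \<exists>r\<in>P. r_lb r = lam p \<and> p \<in> r_hd r \<and> sat_bd I r \<and> r_pos r = {q. (q, p) \<in> E}"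
    using iv[unfolded inv_sg_def] by blast+
  have notused: "r_lb r \<notin> lam ` J"
  proof
    assume "r_lb r \<in> lam ` J"
    then obtain x where x: "x \<in> J" "lam x = r_lb r" by auto
    then obtain r0 where r0: "r0 \<in> P" "r_lb r0 = lam x" "x \<in> r_hd r0"
      using iv5 by blast
    have "r0 = r" using injP r0 r(1) x(2) by (metis inj_onD)
    thus False using r0 x hdJ by auto
  qed
  have cardI: "card (insert p J) = Suc (card J)" using pJ fin by simp
  have "inv_sg I P (insert p J) E' lam' f'"
    unfolding inv_sg_def
  proof (intro conjI)
    show "E' \<subseteq> insert p J \<times> insert p J" using iv1 posJ unfolding E'_def by blast
    show "inj_on lam' (insert p J)" using iv2 notused pJ unfolding lam'_def
      by (auto simp: inj_on_fun_updI)
    show "\<forall>x\<in>insert p J. f' x < card (insert p J)" using iv3 cardI pJ unfolding f'_def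
      by (auto simp: less_Suc_eq)
    show "\<forall>(x, y)\<in>E'. f' x < f' y"
    proof (clarify)
      fix x y assume "(x,y) \<in> E'"
      hence "(x,y) \<in> E \<union> {(q,p) | q. q \<in> r_pos r}" unfolding E'_def .
      thus "f' x < f' y"
      proof (elim UnE)
        assume e: "(x,y) \<in> E"
        hence "x \<in> J" "y \<in> J" using iv1 by auto
        thus ?thesis using e iv4 pJ unfolding f'_def by auto
      next
        assume "(x,y) \<in> {(q,p) | q. q \<in> r_pos r}"
        hence "y = p" "x \<in> J" using posJ by auto
        thus ?thesis using iv3 pJ unfolding f'_def by auto
      qed
    qed
    show "\<forall>pa\<in>insert p J. \<exists>r\<in>P. r_lb r = lam' pa \<and> pa \<in> r_hd r \<and> sat_bd I r \<and> r_pos r = {q. (q, pa) \<in> E'}"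
    proof
      fix x assume x: "x \<in> insert p J"
      show "\<exists>r\<in>P. r_lb r = lam' x \<and> x \<in> r_hd r \<and> sat_bd I r \<and> r_pos r = {q. (q, x) \<in> E'}"
      proof (cases "x = p")
        case True
        have "{q. (q, p) \<in> E'} = r_pos r" using iv1 pJ unfolding E'_def by auto
        thus ?thesis using True r p sbI unfolding lam'_def by auto
      next
        case False
        hence xJ: "x \<in> J" using x by auto
        then obtain r0 where r0: "r0 \<in> P" "r_lb r0 = lam x" "x \<in> r_hd r0" "sat_bd I r0"
             "r_pos r0 = {q. (q, x) \<in> E}" using iv5 by blast
        have "{q. (q, x) \<in> E'} = {q. (q, x) \<in> E}" using False unfolding E'_def by auto
        thus ?thesis using r0 False unfolding lam'_def by auto
      qed
    qed
  qed
  thus ?thesis using p pJ by blast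
qed

lemma build:
  fixes I :: "'a::finite set"
  assumes lp: "labelled_program P" and sm: "stable_model I P"
  shows "n \<le> card I \<Longrightarrow> \<exists>J E lam f. J \<subseteq> I \<and> card J = n \<and> inv_sg I P J E lam f"
proof (induction n)
  case 0
  show ?case by (rule exI[of _ "{}"], rule exI[of _ "{}"]) (auto simp: inv_sg_def)
next
  case (Suc n)
  then obtain J E lam f where J: "J \<subseteq> I" "card J = n" "inv_sg I P J E lam f" by auto
  have "J \<subset> I" using J Suc.prems by auto
  then obtain p E' lam' f' where "p \<in> I - J" "inv_sg I P (insert p J) E' lam' f'"
    using step[OF lp sm _ J(3)] by blast
  moreover have "card (insert p J) = Suc n" using J calculation by simp
  ultimately show ?case using J by blast
qed

theorem theorem1:
  fixes P :: "('a::finite, 'l) lrule set"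
  assumes "labelled_program P"
  shows "SM P \<subseteq> JM P"
proof
  fix I assume "I \<in> SM P"
  hence sm: "stable_model I P" by (simp add: SM_def)
  obtain J E lam f where J: "J \<subseteq> I" "card J = card I" "inv_sg I P J E lam f"
    using build[OF assms sm, of "card I"] by auto
  have "J = I" using J by (simp add: card_subset_eq)
  hence iv: "inv_sg I P I E lam f" using J by simp
  have injP: "inj_on r_lb P" using assms by (simp add: labelled_program_def)
  have mod: "is_model I P"
  proof -
    have mI: "is_model I (reduct P I)" using sm by (simp add: stable_model_def)
    show ?thesis unfolding is_model_def
    proof (intro ballI impI)
      fix r assume r: "r \<in> P" "sat_bd I r"
      let ?r' = "\<lparr>r_lb = r_lb r, r_hd = r_hd r, r_pos = r_pos r, r_neg = {}, r_nn = {}\<rparr>"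
      have "?r' \<in> reduct P I" using r unfolding reduct_def sat_bd_def by auto
      moreover have "sat_bd I ?r'" using r by (simp add: sat_bd_def sat_bd_neg_def)
      ultimately have "sat_hd I ?r'" using mI unfolding is_model_def by blast
      thus "sat_hd I r" by (simp add: sat_hd_def)
    qed
  qed
  have "support_graph I P E lam"
    unfolding support_graph_def
  proof (intro conjI)
    show "E \<subseteq> I \<times> I" "inj_on lam I" using iv unfolding inv_sg_def by auto
    show "lam ` I \<subseteq> Lb P" using iv unfolding inv_sg_def Lb_def by force
    show "\<forall>p\<in>I. \<forall>r\<in>P. r_lb r = lam p \<longrightarrow> r \<in> Defs.Sup I P p \<and> r_pos r = {q. (q, p) \<in> E}"
    proof (intro ballI impI)
      fix p r assume p: "p \<in> I" and r: "r \<in> P" "r_lb r = lam p"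
      then obtain r0 where r0: "r0 \<in> P" "r_lb r0 = lam p" "p \<in> r_hd r0" "sat_bd I r0"
             "r_pos r0 = {q. (q, p) \<in> E}" using iv unfolding inv_sg_def by blast
      have "r = r0" using injP r r0 by (metis inj_onD)
      thus "r \<in> Defs.Sup I P p \<and> r_pos r = {q. (q, p) \<in> E}" using r0 by (simp add: Sup_def)
    qed
  qed
  moreover have "acyclic E" using iv rank_acyclic unfolding inv_sg_def by blast
  ultimately show "I \<in> JM P" using mod by (auto simp: JM_def justified_model_def explanation_def)
qed

end
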